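(* Let $I$ be an instance of 3-SAT$^*$ with 1-in-3-clauses $C_0,\dots,C_{m-1}$, 2-in-3-clauses $C_m,\dots,C_{2m-1}$ and variables $x_0,\dots,x_{n-1}$, and let $\kappa:[n]\times[4]\to[2m]\times[3]$ be the bijection mapping $(j,t)$ to the (clause index, position in that clause) of the first ($t=0$) or second ($t=1$) positive occurrence of $x_j$, or of the first ($t=2$) or second ($t=3$) negative occurrence of $x_j$. Construct the restricted assignment instance $I'$ as follows. Machines: truth assignment machines $\mathtt{TMach}(j,q)$ for $j\in[n],q\in[2]$, and clause machines $\mathtt{CMach}(i,s)$ for $i\in[2m],s\in[3]$. Jobs: (i) for each $j\in[n]$ a truth assignment job $\mathtt{TJob}(j)$ of size $2$ eligible on $\{\mathtt{TMach}(j,0),\mathtt{TMach}(j,1)\}$; (ii) for each $i\in[2m]$ and $s\in[3]$ a clause job $\mathtt{CJob}(i,s)$ eligible on $\{\mathtt{CMach}(i,s'):s'\in[3]\}$, where $\mathtt{CJob}(i,0)$ has size $1$, $\mathtt{CJob}(i,2)$ has size $2$, and $\mathtt{CJob}(i,1)$ has size $2$ if $C_i$ is a 1-in-3-clause and size $1$ otherwise; (iii) for each $j\in[n]$, $t\in[4]$ a variable job $\mathtt{VJob}(j,t)$ of size $1$ eligible on $\{\mathtt{TMach}(j,\lfloor t/2\rfloor),\mathtt{CMach}(\kappa(j,t))\}$. Then there is a satisfying truth assignment for $I$ if and only if there is a schedule of makespan $2$ for $I'$.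
   Context: Notation: $[k]=\{0,\dots,k-1\}$. A 3-SAT$^*$ instance is a conjunction of clauses each with exactly 3 literals, each clause being either a 1-in-3-clause (satisfied iff exactly one of its literals is true) or a 2-in-3-clause (satisfied iff exactly two of its literals are true); there are equally many 1-in-3- and 2-in-3-clauses, and each literal ($x_j$ and $\neg x_j$ for every variable) occurs exactly twice. Restricted assignment: each job has a size and a set of eligible machines, a schedule assigns each job to an eligible machine, and the makespan is the maximum total size assigned to a machine. *)

theory Defs
  imports Main
begin

text \<open>An instance with variables x_0..x_{n-1} and clauses C_0..C_{2m-1}.
  lit i s = (j, b): the literal at position s of clause C_i is x_j if b, and not x_j otherwise.\<close>

definition occurrences :: "(nat \<Rightarrow> nat \<Rightarrow> nat \<times> bool) \<Rightarrow> nat \<Rightarrow> nat \<times> bool \<Rightarrow> (nat \<times> nat) set" where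
  "occurrences lit m l = {(i, s). i < 2 * m \<and> s < 3 \<and> lit i s = l}"

definition sat3_star_instance :: "nat \<Rightarrow> nat \<Rightarrow> (nat \<Rightarrow> nat \<Rightarrow> nat \<times> bool) \<Rightarrow> bool" where
  "sat3_star_instance n m lit \<longleftrightarrow>
     (\<forall>i < 2 * m. \<forall>s < 3. fst (lit i s) < n) \<and>
     (\<forall>j < n. \<forall>b. card (occurrences lit m (j, b)) = 2)"

definition lit_true :: "(nat \<Rightarrow> bool) \<Rightarrow> nat \<times> bool \<Rightarrow> bool" where
  "lit_true \<alpha> l \<longleftrightarrow> \<alpha> (fst l) = snd l"

definition num_true :: "(nat \<Rightarrow> nat \<Rightarrow> nat \<times> bool) \<Rightarrow> (nat \<Rightarrow> bool) \<Rightarrow> nat \<Rightarrow> nat" where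
  "num_true lit \<alpha> i = card {s. s < 3 \<and> lit_true \<alpha> (lit i s)}"

definition satisfies :: "nat \<Rightarrow> (nat \<Rightarrow> nat \<Rightarrow> nat \<times> bool) \<Rightarrow> (nat \<Rightarrow> bool) \<Rightarrow> bool" where
  "satisfies m lit \<alpha> \<longleftrightarrow>
     (\<forall>i < m. num_true lit \<alpha> i = 1) \<and> (\<forall>i. m \<le> i \<and> i < 2 * m \<longrightarrow> num_true lit \<alpha> i = 2)"

text \<open>Occurrence positions are ordered by (clause index, position), i.e. by 3i+s.\<close>
definition pos_index :: "nat \<times> nat \<Rightarrow> nat" where
  "pos_index p = 3 * fst p + snd p"

definition is_kappa :: "nat \<Rightarrow> nat \<Rightarrow> (nat \<Rightarrow> nat \<Rightarrow> nat \<times> bool) \<Rightarrow> (nat \<Rightarrow> nat \<Rightarrow> nat \<times> nat) \<Rightarrow> bool" where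
  "is_kappa n m lit \<kappa> \<longleftrightarrow>
     bij_betw (\<lambda>(j, t). \<kappa> j t) ({..<n} \<times> {..<4}) ({..<2 * m} \<times> {..<3}) \<and>
     (\<forall>j < n. \<forall>t < 4. lit (fst (\<kappa> j t)) (snd (\<kappa> j t)) = (j, t < 2)) \<and>
     (\<forall>j < n. pos_index (\<kappa> j 0) < pos_index (\<kappa> j 1) \<and> pos_index (\<kappa> j 2) < pos_index (\<kappa> j 3))"

definition load :: "'j set \<Rightarrow> ('j \<Rightarrow> nat) \<Rightarrow> ('j \<Rightarrow> 'm) \<Rightarrow> 'm \<Rightarrow> nat" where
  "load J p \<sigma> i = (\<Sum>j\<in>{j\<in>J. \<sigma> j = i}. p j)"

definition is_schedule :: "'j set \<Rightarrow> ('j \<Rightarrow> 'm set) \<Rightarrow> ('j \<Rightarrow> 'm) \<Rightarrow> bool" where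
  "is_schedule J elig \<sigma> \<longleftrightarrow> (\<forall>j\<in>J. \<sigma> j \<in> elig j)"

definition makespan :: "'m set \<Rightarrow> 'j set \<Rightarrow> ('j \<Rightarrow> nat) \<Rightarrow> ('j \<Rightarrow> 'm) \<Rightarrow> nat" where
  "makespan M J p \<sigma> = Max (insert 0 (load J p \<sigma> ` M))"

datatype mach = TMach nat nat | CMach nat nat
datatype job = TJob nat | CJob nat nat | VJob nat nat

definition red_machines :: "nat \<Rightarrow> nat \<Rightarrow> mach set" where
  "red_machines n m = {TMach j q | j q. j < n \<and> q < 2} \<union> {CMach i s | i s. i < 2 * m \<and> s < 3}"

definition red_jobs :: "nat \<Rightarrow> nat \<Rightarrow> job set" where
  "red_jobs n m = {TJob j | j. j < n} \<union> {CJob i s | i s. i < 2 * m \<and> s < 3}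
                  \<union> {VJob j t | j t. j < n \<and> t < 4}"

fun red_size :: "nat \<Rightarrow> job \<Rightarrow> nat" where
  "red_size m (TJob j) = 2"
| "red_size m (CJob i s) = (if s = 0 then 1 else if s = 2 then 2 else (if i < m then 2 else 1))"
| "red_size m (VJob j t) = 1"

fun red_elig :: "(nat \<Rightarrow> nat \<Rightarrow> nat \<times> nat) \<Rightarrow> job \<Rightarrow> mach set" where
  "red_elig \<kappa> (TJob j) = {TMach j 0, TMach j 1}"
| "red_elig \<kappa> (CJob i s) = {CMach i s' | s'. s' < 3}"
| "red_elig \<kappa> (VJob j t) = {TMach j (t div 2), CMach (fst (\<kappa> j t)) (snd (\<kappa> j t))}"

end

theory Submission
  imports Defs
begin

lemma mod3_perm: "s0<(3::nat) \<Longrightarrow> s<3 \<Longrightarrow> s'<3 \<Longrightarrow> (o1::nat) \<le> 1 \<Longrightarrow>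
   ((s0+s'+o1) mod 3 = s) = (s' = (s+6-s0-o1) mod 3)"
proof -
  assume "s0<(3::nat)" "s<3" "s'<3" "(o1::nat) \<le> 1"
  then have "s0 \<in> {0,1,2}" "s\<in>{0,1,2}" "s'\<in>{0,1,2}" "o1\<in>{0,1}" by auto
  then show ?thesis by (elim insertE emptyE; simp)
qed

lemma card3_2: "a<3 \<Longrightarrow> b<3 \<Longrightarrow> a\<noteq>b \<Longrightarrow> card ({..<3::nat} - {a,b}) = 1"
proof -
  assume "a<3" "b<3" "a\<noteq>b"
  then have "a \<in> {0,1,2}" "b\<in>{0,1,2}" "a\<noteq>b" by auto
  moreover have "{..<3::nat} = {0,1,2}" by auto
  ultimately show ?thesis by (elim insertE emptyE; simp)
qed
lemma card3_1: "b<3 \<Longrightarrow> card ({..<3::nat} - {b}) = 2"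
  by (simp add: card_Diff_singleton)

lemma card_one3: "card {s. s < (3::nat) \<and> P s} = 1 \<Longrightarrow> \<exists>s0<3. \<forall>s<3. P s = (s = s0)"
proof -
  assume "card {s. s < (3::nat) \<and> P s} = 1"
  then obtain a where "{s. s < (3::nat) \<and> P s} = {a}" by (auto simp: card_Suc_eq)
  then show ?thesis by (metis (mono_tags, lifting) insertI1 mem_Collect_eq singletonD)
qed

lemma card_two3: "card {s. s < (3::nat) \<and> P s} = 2 \<Longrightarrow> \<exists>s0<3. \<forall>s<3. P s = (s \<noteq> s0)"
proof -
  assume a: "card {s. s < (3::nat) \<and> P s} = 2"
  have "{s. s < (3::nat) \<and> \<not> P s} = {..<3} - {s. s < (3::nat) \<and> P s}" by auto
  moreover have "card ({..<3} - {s. s < (3::nat) \<and> P s}) = 3 - 2"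
    using a by (subst card_Diff_subset) auto
  ultimately have "card {s. s < (3::nat) \<and> \<not> P s} = 1" by simp
  then obtain b where "{s. s < (3::nat) \<and> \<not> P s} = {b}" by (auto simp: card_Suc_eq)
  then show ?thesis by (metis (mono_tags, lifting) insertI1 mem_Collect_eq singletonD)
qed

lemma load_pair:
  assumes "finite J" "x \<in> J" "y \<in> J" "x \<noteq> y" "\<sigma> x = M" "\<sigma> y = M"
  shows "p x + p y \<le> load J p \<sigma> M"
proof -
  have "p x + p y = sum p {x, y}" using assms by simp
  also have "\<dots> \<le> sum p {j\<in>J. \<sigma> j = M}"
    by (rule sum_mono2) (use assms in auto)
  finally show ?thesis unfolding load_def .
qed

lemma load_sub:
  assumes "finite B" "{j\<in>J. \<sigma> j = M} \<subseteq> B"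
  shows "load J (p::_\<Rightarrow>nat) \<sigma> M \<le> sum p B"
  unfolding load_def by (rule sum_mono2) (use assms in auto)

lemma fin_machines: "finite (red_machines n m)"
proof -
  have "red_machines n m = (\<lambda>(j,q). TMach j q) ` ({..<n} \<times> {..<2}) \<union> (\<lambda>(i,s). CMach i s) ` ({..<2*m} \<times> {..<3})"
    unfolding red_machines_def by auto
  then show ?thesis by simp
qed

lemma fin_jobs: "finite (red_jobs n m)"
proof -
  have "red_jobs n m = TJob ` {..<n} \<union> (\<lambda>(i,s). CJob i s) ` ({..<2*m} \<times> {..<3})
      \<union> (\<lambda>(j,t). VJob j t) ` ({..<n} \<times> {..<4})"
    unfolding red_jobs_def by auto
  then show ?thesis by simp
qed

lemma makespan_le:
  "makespan (red_machines n m) J p \<sigma> \<le> 2 \<longleftrightarrow> (\<forall>M\<in>red_machines n m. load J p \<sigma> M \<le> 2)"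
  unfolding makespan_def using fin_machines[of n m] by auto

lemma size_ok: "s0<3 \<Longrightarrow> s<(3::nat) \<Longrightarrow> red_size m (CJob i ((s+6-s0-(if i<m then 0 else 1)) mod 3)) + (if ((s=s0) = (i<m)) then 1 else 0) \<le> 2"
proof -
  assume "s0<3" "s<(3::nat)"
  then have "s0 \<in> {0,1,2}" "s\<in>{0,1,2}" by auto
  then show ?thesis by (cases "i<m"; elim insertE emptyE; simp)
qed

lemma sum_g: "(\<Sum>i<2*m. (if i<m then 1 else 2::nat)) = 3*m"
proof -
  let ?g = "\<lambda>i. (if i<m then 1 else 2::nat)"
  have e: "{..<2*m} = {..<m} \<union> {m..<m+m}" by auto
  have "sum ?g {..<2*m} = sum ?g {..<m} + sum ?g {m..<m+m}"
    unfolding e by (rule sum.union_disjoint) auto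
  also have "sum ?g {..<m} = (\<Sum>i<m. 1)" by (rule sum.cong) auto
  also have "sum ?g {m..<m+m} = (\<Sum>i=m..<m+m. 2)" by (rule sum.cong) auto
  finally show ?thesis by simp
qed

theorem lemma8:
  fixes n m :: nat and lit :: "nat \<Rightarrow> nat \<Rightarrow> nat \<times> bool" and \<kappa> :: "nat \<Rightarrow> nat \<Rightarrow> nat \<times> nat"
  assumes "sat3_star_instance n m lit"
    and "is_kappa n m lit \<kappa>"
  shows "(\<exists>\<alpha>. satisfies m lit \<alpha>) \<longleftrightarrow>
         (\<exists>\<sigma>. is_schedule (red_jobs n m) (red_elig \<kappa>) \<sigma> \<and>
               makespan (red_machines n m) (red_jobs n m) (red_size m) \<sigma> \<le> 2)"
proof -
  have bij: "bij_betw (\<lambda>(j, t). \<kappa> j t) ({..<n} \<times> {..<4}) ({..<2 * m} \<times> {..<3})"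
    using assms(2) unfolding is_kappa_def by blast
  have klit: "\<And>j t. j < n \<Longrightarrow> t < 4 \<Longrightarrow> lit (fst (\<kappa> j t)) (snd (\<kappa> j t)) = (j, t < 2)"
    using assms(2) unfolding is_kappa_def by blast
  have kin: "\<And>j t. j < n \<Longrightarrow> t < 4 \<Longrightarrow> fst (\<kappa> j t) < 2*m \<and> snd (\<kappa> j t) < 3"
  proof -
    fix j t assume "j < n" "t < (4::nat)"
    then have "(\<lambda>(j, t). \<kappa> j t) (j,t) \<in> {..<2 * m} \<times> {..<3}"
      using bij unfolding bij_betw_def by blast
    then show "fst (\<kappa> j t) < 2*m \<and> snd (\<kappa> j t) < 3" by (auto simp: mem_Times_iff)
  qed
  have kinj: "\<And>j t j' t'. j < n \<Longrightarrow> t < 4 \<Longrightarrow> j' < n \<Longrightarrow> t' < 4 \<Longrightarrow> \<kappa> j t = \<kappa> j' t' \<Longrightarrow> j = j' \<and> t = t'"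
  proof -
    fix j t j' t' assume a: "j < n" "t < (4::nat)" "j' < n" "t' < (4::nat)" "\<kappa> j t = \<kappa> j' t'"
    have "inj_on (\<lambda>(j, t). \<kappa> j t) ({..<n} \<times> {..<4})" using bij unfolding bij_betw_def by blast
    then have "(j,t) = (j',t')" using a unfolding inj_on_def by auto
    then show "j = j' \<and> t = t'" by simp
  qed
  have ksurj: "\<And>i s. i < 2*m \<Longrightarrow> s < 3 \<Longrightarrow> \<exists>j t. j < n \<and> t < 4 \<and> \<kappa> j t = (i, s)"
  proof -
    fix i s assume "i < 2*m" "s < (3::nat)"
    then have "(i,s) \<in> (\<lambda>(j, t). \<kappa> j t) ` ({..<n} \<times> {..<4})"
      using bij unfolding bij_betw_def by auto
    then obtain p where "p \<in> {..<n} \<times> {..<4}" "(i,s) = (\<lambda>(j, t). \<kappa> j t) p" by blast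
    then show "\<exists>j t. j < n \<and> t < 4 \<and> \<kappa> j t = (i, s)" by (cases p) auto
  qed
  have cardeq: "n * 4 = 2 * m * 3"
    using bij_betw_same_card[OF bij] by simp
  show ?thesis
  proof
    assume "\<exists>\<alpha>. satisfies m lit \<alpha>"
    then obtain \<alpha> where sat: "satisfies m lit \<alpha>" by blast
    define tr where "tr i s = lit_true \<alpha> (lit i s)" for i s
    have ex0: "\<exists>s0<3. \<forall>s<3. tr i s = ((s = s0) = (i < m))" if "i < 2*m" for i
    proof (cases "i < m")
      case True
      then have "num_true lit \<alpha> i = 1" using sat unfolding satisfies_def by blast
      then have "card {s. s < 3 \<and> tr i s} = 1" unfolding num_true_def tr_def .
      from card_one3[OF this] show ?thesis using True by simp
    next
      case False
      then have "num_true lit \<alpha> i = 2" using sat that unfolding satisfies_def by simp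
      then have "card {s. s < 3 \<and> tr i s} = 2" unfolding num_true_def tr_def .
      from card_two3[OF this] show ?thesis using False by simp
    qed
    define S0 where "S0 i = (SOME s0. s0 < 3 \<and> (\<forall>s<3. tr i s = ((s = s0) = (i < m))))" for i
    have S0: "S0 i < 3" "\<And>s. s < 3 \<Longrightarrow> tr i s = ((s = S0 i) = (i < m))" if "i < 2*m" for i
      using someI_ex[OF ex0[OF that]] unfolding S0_def by auto
    define off where "off i = (if i < m then 0 else 1::nat)" for i
    define c where "c i s' = (S0 i + s' + off i) mod 3" for i s'
    define d where "d i s = (s + 6 - S0 i - off i) mod 3" for i s
    define \<sigma> where "\<sigma> x = (case x of TJob j \<Rightarrow> TMach j (if \<alpha> j then 0 else 1)
        | CJob i s' \<Rightarrow> CMach i (c i s')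
        | VJob j t \<Rightarrow> (if \<alpha> j = (t < 2) then CMach (fst (\<kappa> j t)) (snd (\<kappa> j t)) else TMach j (t div 2)))" for x
    have sched: "is_schedule (red_jobs n m) (red_elig \<kappa>) \<sigma>"
      unfolding is_schedule_def
    proof
      fix x assume "x \<in> red_jobs n m"
      then show "\<sigma> x \<in> red_elig \<kappa> x"
        by (cases x) (auto simp: \<sigma>_def c_def)
    qed
    have loads: "load (red_jobs n m) (red_size m) \<sigma> M \<le> 2" if M: "M \<in> red_machines n m" for M
    proof -
      consider (T) j q where "M = TMach j q" "j < n" "q < 2" | (C) i s where "M = CMach i s" "i < 2*m" "s < 3"
        using M unfolding red_machines_def by blast
      then show ?thesis
      proof cases
        case T
        show ?thesis
        proof (cases "q = (if \<alpha> j then 0 else 1)")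
          case True
          have "{x\<in>red_jobs n m. \<sigma> x = M} \<subseteq> {TJob j}"
          proof
            fix x assume x: "x \<in> {x\<in>red_jobs n m. \<sigma> x = M}"
            show "x \<in> {TJob j}"
            proof (cases x)
              case (VJob j' t')
              then have "t' < 4" using x unfolding red_jobs_def by auto
              then show ?thesis using x VJob T True by (auto simp: \<sigma>_def split: if_splits)
            qed (use x T in \<open>auto simp: \<sigma>_def\<close>)
          qed
          then have "load (red_jobs n m) (red_size m) \<sigma> M \<le> sum (red_size m) {TJob j}"
            by (intro load_sub) auto
          then show ?thesis by simp
        next
          case False
          have "{x\<in>red_jobs n m. \<sigma> x = M} \<subseteq> {VJob j (2*q), VJob j (2*q+1)}"
          proof
            fix x assume x: "x \<in> {x\<in>red_jobs n m. \<sigma> x = M}"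
            show "x \<in> {VJob j (2*q), VJob j (2*q+1)}"
            proof (cases x)
              case (VJob j' t')
              then have "t' < 4" using x unfolding red_jobs_def by auto
              then show ?thesis using x VJob T False by (auto simp: \<sigma>_def split: if_splits)
            qed (use x T False in \<open>auto simp: \<sigma>_def split: if_splits\<close>)
          qed
          then have "load (red_jobs n m) (red_size m) \<sigma> M \<le> sum (red_size m) {VJob j (2*q), VJob j (2*q+1)}"
            by (intro load_sub) auto
          then show ?thesis by simp
        qed
      next
        case C
        obtain j0 t0 where j0: "j0 < n" "t0 < 4" "\<kappa> j0 t0 = (i, s)" using ksurj[OF C(2,3)] by blast
        have trj0: "tr i s = (\<alpha> j0 = (t0 < 2))"
          using klit[OF j0(1,2)] j0(3) unfolding tr_def lit_true_def by simp
        have sub: "{x\<in>red_jobs n m. \<sigma> x = M} \<subseteq> insert (CJob i (d i s)) (if tr i s then {VJob j0 t0} else {})"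
        proof
          fix x assume x: "x \<in> {x\<in>red_jobs n m. \<sigma> x = M}"
          show "x \<in> insert (CJob i (d i s)) (if tr i s then {VJob j0 t0} else {})"
          proof (cases x)
            case (TJob j)
            then show ?thesis using x C by (auto simp: \<sigma>_def)
          next
            case (CJob i' s')
            then have "i' = i" "c i s' = s" "s' < 3" using x C unfolding red_jobs_def by (auto simp: \<sigma>_def)
            then have "s' = d i s" unfolding c_def d_def
              using mod3_perm[of "S0 i" s s' "off i"] S0(1)[OF C(2)] C(3) by (simp add: off_def)
            then show ?thesis using CJob \<open>i' = i\<close> by simp
          next
            case (VJob j t)
            then have jt: "j < n" "t < 4" using x unfolding red_jobs_def by auto
            show ?thesis
            proof (cases "\<alpha> j = (t < 2)")
              case True
              then have "\<kappa> j t = (i, s)" using x VJob C by (auto simp: \<sigma>_def prod_eq_iff)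
              then have "j = j0 \<and> t = t0" using kinj[OF jt j0(1,2)] j0(3) by simp
              then show ?thesis using True trj0 VJob by simp
            next
              case False
              then show ?thesis using x VJob C by (auto simp: \<sigma>_def)
            qed
          qed
        qed
        then have "load (red_jobs n m) (red_size m) \<sigma> M \<le> sum (red_size m) (insert (CJob i (d i s)) (if tr i s then {VJob j0 t0} else {}))"
          by (intro load_sub) auto
        also have "\<dots> = red_size m (CJob i (d i s)) + (if tr i s then 1 else 0)"
          by auto
        also have "\<dots> \<le> 2"
          using size_ok[of "S0 i" s m i] S0[OF C(2)] C(3) unfolding d_def off_def by simp
        finally show ?thesis .
      qed
    qed
    show "\<exists>\<sigma>. is_schedule (red_jobs n m) (red_elig \<kappa>) \<sigma> \<and>
               makespan (red_machines n m) (red_jobs n m) (red_size m) \<sigma> \<le> 2"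
      using sched loads makespan_le by blast
  next
    assume "\<exists>\<sigma>. is_schedule (red_jobs n m) (red_elig \<kappa>) \<sigma> \<and>
               makespan (red_machines n m) (red_jobs n m) (red_size m) \<sigma> \<le> 2"
    then obtain \<sigma> where sched: "is_schedule (red_jobs n m) (red_elig \<kappa>) \<sigma>"
      and mk: "makespan (red_machines n m) (red_jobs n m) (red_size m) \<sigma> \<le> 2" by blast
    let ?J = "red_jobs n m"
    have ld: "load ?J (red_size m) \<sigma> M \<le> 2" if "M \<in> red_machines n m" for M
      using mk makespan_le that by blast
    have el: "\<sigma> x \<in> red_elig \<kappa> x" if "x \<in> ?J" for x
      using sched that unfolding is_schedule_def by blast
    have finJ: "finite ?J" by (rule fin_jobs)
    define \<alpha> where "\<alpha> j = (\<sigma> (TJob j) = TMach j 0)" for j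
    define tr where "tr i s = lit_true \<alpha> (lit i s)" for i s
    have key: "\<exists>j t. j < n \<and> t < 4 \<and> \<sigma> (VJob j t) = CMach i s \<and> VJob j t \<in> ?J"
      if P: "i < 2*m" "s < 3" "tr i s" for i s
    proof -
      obtain j0 t0 where j0: "j0 < n" "t0 < 4" "\<kappa> j0 t0 = (i, s)" using ksurj[OF P(1,2)] by blast
      have "\<alpha> j0 = (t0 < 2)"
        using klit[OF j0(1,2)] j0(3) P(3) unfolding tr_def lit_true_def by simp
      have TJ: "TJob j0 \<in> ?J" "VJob j0 t0 \<in> ?J" using j0 unfolding red_jobs_def by auto
      have "\<sigma> (TJob j0) \<in> {TMach j0 0, TMach j0 1}" using el[OF TJ(1)] by simp
      then have t1: "\<sigma> (TJob j0) = TMach j0 (t0 div 2)"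
        using \<open>\<alpha> j0 = (t0 < 2)\<close> j0(2) unfolding \<alpha>_def by (auto split: if_splits)
      have v: "\<sigma> (VJob j0 t0) \<in> {TMach j0 (t0 div 2), CMach i s}" using el[OF TJ(2)] j0(3) by simp
      have "\<sigma> (VJob j0 t0) \<noteq> TMach j0 (t0 div 2)"
      proof
        assume a: "\<sigma> (VJob j0 t0) = TMach j0 (t0 div 2)"
        have "red_size m (TJob j0) + red_size m (VJob j0 t0) \<le> load ?J (red_size m) \<sigma> (TMach j0 (t0 div 2))"
          by (rule load_pair[OF finJ TJ]) (use a t1 in auto)
        moreover have "TMach j0 (t0 div 2) \<in> red_machines n m"
          using j0 unfolding red_machines_def by auto
        ultimately show False using ld by fastforce
      qed
      then show ?thesis using v j0 TJ by auto
    qed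
    have CJ: "CJob i s' \<in> ?J" if "i < 2*m" "s' < 3" for i s' using that unfolding red_jobs_def by auto
    have CM: "CMach i s \<in> red_machines n m" if "i < 2*m" "s < 3" for i s using that unfolding red_machines_def by auto
    have cpos: "\<exists>a<3. \<sigma> (CJob i s') = CMach i a" if "i < 2*m" "s' < 3" for i s'
      using el[OF CJ[OF that]] by auto
    have avoid: "\<sigma> (CJob i s') \<noteq> CMach i s"
      if P: "i < 2*m" "s < 3" "s' < 3" "tr i s" "red_size m (CJob i s') = 2" for i s s'
    proof
      assume a: "\<sigma> (CJob i s') = CMach i s"
      obtain j t where jt: "j < n" "t < 4" "\<sigma> (VJob j t) = CMach i s" "VJob j t \<in> ?J"
        using key[OF P(1,2,4)] by blast
      have "red_size m (CJob i s') + red_size m (VJob j t) \<le> load ?J (red_size m) \<sigma> (CMach i s)"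
        by (rule load_pair[OF finJ CJ[OF P(1,3)] jt(4)]) (use a jt in auto)
      then show False using ld[OF CM[OF P(1,2)]] P(5) by simp
    qed
    define g where "g i = (if i < m then 1 else 2::nat)" for i
    have bound: "num_true lit \<alpha> i \<le> g i" if P: "i < 2*m" for i
    proof -
      have nt: "num_true lit \<alpha> i = card {s. s < 3 \<and> tr i s}" unfolding num_true_def tr_def ..
      obtain a2 where a2: "a2 < 3" "\<sigma> (CJob i 2) = CMach i a2" using cpos[OF P, of 2] by auto
      show ?thesis
      proof (cases "i < m")
        case True
        obtain a1 where a1: "a1 < 3" "\<sigma> (CJob i 1) = CMach i a1" using cpos[OF P, of 1] by auto
        have "a1 \<noteq> a2"
        proof
          assume "a1 = a2"
          have "red_size m (CJob i 1) + red_size m (CJob i 2) \<le> load ?J (red_size m) \<sigma> (CMach i a1)"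
            by (rule load_pair[OF finJ CJ[OF P] CJ[OF P]]) (use a1 a2 \<open>a1 = a2\<close> in auto)
          then show False using ld[OF CM[OF P a1(1)]] True by simp
        qed
        have "{s. s < 3 \<and> tr i s} \<subseteq> {..<3} - {a1, a2}"
          using avoid[OF P _ _ _, of _ 1] avoid[OF P _ _ _, of _ 2] a1 a2 True by fastforce
        then have "card {s. s < 3 \<and> tr i s} \<le> card ({..<3::nat} - {a1, a2})"
          by (intro card_mono) auto
        then show ?thesis using card3_2[OF a1(1) a2(1) \<open>a1 \<noteq> a2\<close>] nt True g_def by simp
      next
        case False
        have "{s. s < 3 \<and> tr i s} \<subseteq> {..<3} - {a2}"
          using avoid[OF P _ _ _, of _ 2] a2 by fastforce
        then have "card {s. s < 3 \<and> tr i s} \<le> card ({..<3::nat} - {a2})"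
          by (intro card_mono) auto
        then show ?thesis using card3_1[OF a2(1)] nt False g_def by simp
      qed
    qed
    have total: "(\<Sum>i<2*m. num_true lit \<alpha> i) = 2 * n"
    proof -
      define S where "S = Sigma {..<2*m} (\<lambda>i. {s. s < 3 \<and> tr i s})"
      define T where "T = Sigma {..<n} (\<lambda>j. {t. t < (4::nat) \<and> \<alpha> j = (t < 2)})"
      have cS: "card S = (\<Sum>i<2*m. num_true lit \<alpha> i)"
        unfolding S_def num_true_def tr_def by (subst card_SigmaI) auto
      have inner: "card {t. t < (4::nat) \<and> \<alpha> j = (t < 2)} = 2" for j
      proof (cases "\<alpha> j")
        case True
        then have "{t. t < (4::nat) \<and> \<alpha> j = (t < 2)} = {0,1}" by auto
        then show ?thesis by simp
      next
        case False
        then have "{t. t < (4::nat) \<and> \<alpha> j = (t < 2)} = {2,3}" by auto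
        then show ?thesis by simp
      qed
      have cT: "card T = 2 * n"
        unfolding T_def by (subst card_SigmaI) (auto simp: inner)
      have injT: "inj_on (\<lambda>(j, t). \<kappa> j t) T"
        using bij unfolding bij_betw_def T_def by (rule inj_on_subset[OF conjunct1]) auto
      have img: "(\<lambda>(j, t). \<kappa> j t) ` T = S"
      proof
        show "(\<lambda>(j, t). \<kappa> j t) ` T \<subseteq> S"
        proof
          fix p assume "p \<in> (\<lambda>(j, t). \<kappa> j t) ` T"
          then obtain j t where jt: "j < n" "t < 4" "\<alpha> j = (t < 2)" "p = \<kappa> j t" unfolding T_def by auto
          obtain i s where ik: "\<kappa> j t = (i, s)" by (cases "\<kappa> j t")
          show "p \<in> S" using kin[OF jt(1,2)] klit[OF jt(1,2)] jt(3,4) ik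
            unfolding S_def tr_def lit_true_def by auto
        qed
        show "S \<subseteq> (\<lambda>(j, t). \<kappa> j t) ` T"
        proof
          fix p assume "p \<in> S"
          then obtain i s where ik: "p = (i, s)" "i < 2*m" "s < 3" "tr i s" unfolding S_def by auto
          obtain j t where jt: "j < n" "t < 4" "\<kappa> j t = (i, s)" using ksurj[OF ik(2,3)] by blast
          have "\<alpha> j = (t < 2)" using klit[OF jt(1,2)] jt(3) ik(4) unfolding tr_def lit_true_def by simp
          then have "(j, t) \<in> T" using jt unfolding T_def by auto
          then show "p \<in> (\<lambda>(j, t). \<kappa> j t) ` T" using jt ik by force
        qed
      qed
      have "card S = card T" using card_image[OF injT] img by simp
      then show ?thesis using cS cT by simp
    qed
    have gsum: "(\<Sum>i<2*m. g i) = 2 * n" using sum_g[of m] cardeq unfolding g_def by simp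
    have eq: "num_true lit \<alpha> i = g i" if "i < 2*m" for i
    proof (rule ccontr)
      assume "num_true lit \<alpha> i \<noteq> g i"
      then have "num_true lit \<alpha> i < g i" using bound[OF that] by simp
      then have "(\<Sum>i<2*m. num_true lit \<alpha> i) < (\<Sum>i<2*m. g i)"
        using bound that by (intro sum_strict_mono_ex1) auto
      then show False using total gsum by simp
    qed
    have "satisfies m lit \<alpha>" unfolding satisfies_def
      using eq unfolding g_def by (metis less_trans_Suc le_less_trans not_le mult_2 trans_less_add1 add_lessD1 nat_add_left_cancel_less less_imp_add_positive)
    then show "\<exists>\<alpha>. satisfies m lit \<alpha>" by blast
  qed
qed
end
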